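(* Let $f_i:\mathbb{R}^d\to\mathbb{R}$ be twice differentiable, let $\lambda\in[0,1)$, $w^t\in\mathbb{R}^d$, $s^t\ge0$, and let $$q_{i,t}(w)=f_i(w^t)+\langle\nabla f_i(w^t),w-w^t\rangle+\tfrac12\langle\nabla^2 f_i(w^t)(w-w^t),w-w^t\rangle .$$ Define $$(w^{t+1/2},s^{t+1/2})=\arg\min_{s\ge0,\,w\in\mathbb{R}^d}\ \tfrac{1-\lambda}{2}\big(\|w-w^t\|^2+(s-s^t)^2\big)+\tfrac{\lambda}{2}s^2\ \text{ s.t. }\ q_{i,t}(w^t)+\langle\nabla q_{i,t}(w^t),w-w^t\rangle\le s,$$ $$(w^{t+1},s^{t+1})=\arg\min_{s\ge0,\,w\in\mathbb{R}^d}\ \tfrac{1-\lambda}{2}\big(\|w-w^{t+1/2}\|^2+(s-s^{t+1/2})^2\big)+\tfrac{\lambda}{2}s^2\ \text{ s.t. }\ q_{i,t}(w^{t+1/2})+\langle\nabla q_{i,t}(w^{t+1/2}),w-w^{t+1/2}\rangle\le s.$$ Then $$w^{t+1}=w^t-(\Gamma_1+\Gamma_2)\nabla f_i(w^t)+\Gamma_2\Gamma_1\nabla^2 f_i(w^t)\nabla f_i(w^t),\qquad s^{t+1}=(1-\lambda)\big((1-\lambda)(s^t+\Gamma_1)+\Gamma_2\big),$$ where $$\Gamma_1=\frac{(f_i(w^t)-(1-\lambda)s^t)_+}{1-\lambda+\|\nabla f_i(w^t)\|^2},$$ $$\Gamma_2=\left(\frac{f_i(w^t)-\Gamma_1\|\nabla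 f_i(w^t)\|^2-(1-\lambda)^2(s^t+\Gamma_1)+\tfrac12\Gamma_1^2\langle\nabla^2 f_i(w^t)\nabla f_i(w^t),\nabla f_i(w^t)\rangle}{1-\lambda+\|\nabla f_i(w^t)-\Gamma_1\nabla^2 f_i(w^t)\nabla f_i(w^t)\|^2}\right)_+,$$ and $(x)_+=x$ if $x\ge0$ and $(x)_+=0$ otherwise.
   Context: This two-step update is called SP2L2$^+$; it approximately solves the L2-slack formulation $\min_{s,w}\frac12 s^2$ s.t. $f_i(w)\le s$ for all $i$. *)

theory Defs
  imports "HOL-Analysis.Analysis"
begin

definition grad :: "(real^'n \<Rightarrow> real) \<Rightarrow> real^'n \<Rightarrow> real^'n" where
  "grad F x = (THE v. (F has_derivative (\<lambda>h. v \<bullet> h)) (at x))"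

definition hess :: "(real^'n \<Rightarrow> real) \<Rightarrow> real^'n \<Rightarrow> real^'n^'n" where
  "hess F x = (THE A. (grad F has_derivative (\<lambda>h. A *v h)) (at x))"

definition twice_differentiable :: "(real^'n \<Rightarrow> real) \<Rightarrow> bool" where
  "twice_differentiable F \<longleftrightarrow>
     (\<forall>x. F differentiable (at x)) \<and> (\<forall>x. grad F differentiable (at x))"

definition qmodel :: "(real^'n \<Rightarrow> real) \<Rightarrow> real^'n \<Rightarrow> real^'n \<Rightarrow> real" where
  "qmodel f wt w = f wt + grad f wt \<bullet> (w - wt)
                  + 1/2 * ((hess f wt *v (w - wt)) \<bullet> (w - wt))"

definition pos :: "real \<Rightarrow> real" where
  "pos x = (if x \<ge> 0 then x else 0)"

definition obj :: "real \<Rightarrow> real^'n \<Rightarrow> real \<Rightarrow> real^'n \<Rightarrow> real \<Rightarrow> real" where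
  "obj lam wc sc w s = (1 - lam) / 2 * ((norm (w - wc))\<^sup>2 + (s - sc)\<^sup>2) + lam / 2 * s\<^sup>2"

definition is_step_min ::
  "real \<Rightarrow> (real^'n \<Rightarrow> real) \<Rightarrow> real^'n \<Rightarrow> real \<Rightarrow> real^'n \<Rightarrow> real \<Rightarrow> bool" where
  "is_step_min lam q wc sc w s \<longleftrightarrow>
     (let feas = (\<lambda>w' s'. s' \<ge> 0 \<and> q wc + grad q wc \<bullet> (w' - wc) \<le> s')
      in feas w s \<and> (\<forall>w' s'. feas w' s' \<longrightarrow> obj lam wc sc w s \<le> obj lam wc sc w' s'))"

end

theory Submission
  imports Defs
begin


lemma line_deriv:
  fixes F :: "real^'n \<Rightarrow> real"
  assumes dF: "\<And>p. (F has_derivative (\<lambda>h. G p \<bullet> h)) (at p)"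
  shows "((\<lambda>s. F (c + s *\<^sub>R u)) has_real_derivative (G (c + s *\<^sub>R u) \<bullet> u)) (at s)"
proof -
  have l: "((\<lambda>s. c + s *\<^sub>R u) has_derivative (\<lambda>h. h *\<^sub>R u)) (at s)"
    by (auto intro!: derivative_eq_intros)
  have "((\<lambda>s. F (c + s *\<^sub>R u)) has_derivative (\<lambda>h. G (c + s *\<^sub>R u) \<bullet> (h *\<^sub>R u))) (at s)"
    using has_derivative_compose[OF l dF] .
  moreover have "(\<lambda>h. G (c + s *\<^sub>R u) \<bullet> (h *\<^sub>R u)) = (*) (G (c + s *\<^sub>R u) \<bullet> u)"
    by (auto simp: fun_eq_iff)
  ultimately show ?thesis unfolding has_field_derivative_def by simp
qed

lemma delta_bound:
  fixes F :: "real^'n \<Rightarrow> real" and A :: "real^'n^'n"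
  assumes dF: "\<And>p. (F has_derivative (\<lambda>h. G p \<bullet> h)) (at p)"
    and hG: "\<And>y. norm (y - x) < d \<Longrightarrow> norm (G y - G x - A *v (y - x)) \<le> e * norm (y - x)"
    and e0: "e \<ge> 0" and t: "t > 0" "t * (norm u + norm v) < d"
  shows "\<bar>F (x + t *\<^sub>R u + t *\<^sub>R v) - F (x + t *\<^sub>R u) - F (x + t *\<^sub>R v) + F x - t\<^sup>2 * ((A *v v) \<bullet> u)\<bar>
         \<le> t\<^sup>2 * (e * (norm u * (2 * norm u + norm v)))"
proof -
  define \<phi> where "\<phi> s = F ((x + t *\<^sub>R v) + s *\<^sub>R u) - F (x + s *\<^sub>R u) - s * (t * ((A *v v) \<bullet> u))" for s
  define \<phi>' where "\<phi>' s = G ((x + t *\<^sub>R v) + s *\<^sub>R u) \<bullet> u - G (x + s *\<^sub>R u) \<bullet> u - t * ((A *v v) \<bullet> u)" for s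
  have D: "(\<phi> has_real_derivative \<phi>' s) (at s)" for s
    unfolding \<phi>_def \<phi>'_def
    by (intro derivative_eq_intros line_deriv[OF dF]) (auto intro: line_deriv[OF dF])
  obtain z where z: "0 < z" "z < t" "\<phi> t - \<phi> 0 = (t - 0) * \<phi>' z"
    using MVT2[OF t(1) D] by blast
  have y1: "norm (z *\<^sub>R u + t *\<^sub>R v) \<le> t * norm u + t * norm v"
    using z t by (smt (verit) mult_right_mono norm_ge_zero norm_scaleR norm_triangle_ineq real_norm_def)
  have y2: "norm (z *\<^sub>R u) \<le> t * norm u"
    using z t by (simp add: mult_right_mono)
  have "norm (G ((x + t *\<^sub>R v) + z *\<^sub>R u) - G (x + z *\<^sub>R u) - t *\<^sub>R (A *v v))
       = norm ((G (x + (z *\<^sub>R u + t *\<^sub>R v)) - G x - A *v (z *\<^sub>R u + t *\<^sub>R v))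
              - (G (x + z *\<^sub>R u) - G x - A *v (z *\<^sub>R u)))"
    by (simp add: matrix_vector_right_distrib algebra_simps matrix_vector_mult_scaleR)
  also have "\<dots> \<le> norm (G (x + (z *\<^sub>R u + t *\<^sub>R v)) - G x - A *v (z *\<^sub>R u + t *\<^sub>R v))
              + norm (G (x + z *\<^sub>R u) - G x - A *v (z *\<^sub>R u))"
    by (rule norm_triangle_ineq4)
  also have "\<dots> \<le> e * norm (z *\<^sub>R u + t *\<^sub>R v) + e * norm (z *\<^sub>R u)"
  proof (rule add_mono)
    show "norm (G (x + (z *\<^sub>R u + t *\<^sub>R v)) - G x - A *v (z *\<^sub>R u + t *\<^sub>R v)) \<le> e * norm (z *\<^sub>R u + t *\<^sub>R v)"
      using hG[of "x + (z *\<^sub>R u + t *\<^sub>R v)"] y1 t by (simp add: distrib_left)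
    show "norm (G (x + z *\<^sub>R u) - G x - A *v (z *\<^sub>R u)) \<le> e * norm (z *\<^sub>R u)"
      using hG[of "x + z *\<^sub>R u"] y2 t
      by (smt (verit, best) add_diff_cancel_left' distrib_left mult_nonneg_nonneg norm_ge_zero)
  qed
  also have "\<dots> \<le> e * (t * (2 * norm u + norm v))"
  proof -
    have "norm (z *\<^sub>R u + t *\<^sub>R v) + norm (z *\<^sub>R u) \<le> t * (2 * norm u + norm v)"
      using y1 y2 by (simp add: algebra_simps)
    then show ?thesis using e0
      by (metis distrib_left mult_left_mono)
  qed
  finally have nb: "norm (G ((x + t *\<^sub>R v) + z *\<^sub>R u) - G (x + z *\<^sub>R u) - t *\<^sub>R (A *v v)) \<le> e * (t * (2 * norm u + norm v))" .
  have "\<bar>\<phi>' z\<bar> = \<bar>(G ((x + t *\<^sub>R v) + z *\<^sub>R u) - G (x + z *\<^sub>R u) - t *\<^sub>R (A *v v)) \<bullet> u\<bar>"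
    unfolding \<phi>'_def by (simp add: inner_diff_left)
  also have "\<dots> \<le> e * (t * (2 * norm u + norm v)) * norm u"
    by (meson Cauchy_Schwarz_ineq2 nb mult_right_mono norm_ge_zero order_trans)
  finally have pb: "\<bar>\<phi>' z\<bar> \<le> e * (t * (2 * norm u + norm v)) * norm u" .
  have "\<phi> t - \<phi> 0 = F (x + t *\<^sub>R u + t *\<^sub>R v) - F (x + t *\<^sub>R u) - F (x + t *\<^sub>R v) + F x - t\<^sup>2 * ((A *v v) \<bullet> u)"
    unfolding \<phi>_def by (simp add: algebra_simps power2_eq_square)
  then have "\<bar>F (x + t *\<^sub>R u + t *\<^sub>R v) - F (x + t *\<^sub>R u) - F (x + t *\<^sub>R v) + F x - t\<^sup>2 * ((A *v v) \<bullet> u)\<bar>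
     = t * \<bar>\<phi>' z\<bar>" using z(3) t(1) by (metis abs_mult abs_of_pos diff_zero)
  also have "\<dots> \<le> t * (e * (t * (2 * norm u + norm v)) * norm u)"
    using pb t(1) by (simp add: mult_left_mono)
  also have "\<dots> = t\<^sup>2 * (e * (norm u * (2 * norm u + norm v)))"
    by (simp add: power2_eq_square algebra_simps)
  finally show ?thesis .
qed
lemma grad_unique:
  fixes F :: "real^'n \<Rightarrow> real"
  assumes "(F has_derivative (\<lambda>h. v \<bullet> h)) (at x)"
  shows "grad F x = v"
  unfolding grad_def
proof (rule the_equality)
  show "(F has_derivative (\<lambda>h. v \<bullet> h)) (at x)" by fact
  fix w assume "(F has_derivative (\<lambda>h. w \<bullet> h)) (at x)"
  then have "(\<lambda>h. w \<bullet> h) = (\<lambda>h. v \<bullet> h)" using assms has_derivative_unique by blast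
  then have "w \<bullet> (w - v) = v \<bullet> (w - v)" by metis
  then have "(w - v) \<bullet> (w - v) = 0" by (simp add: inner_diff_left)
  then show "w = v" by simp
qed

lemma grad_works:
  fixes F :: "real^'n \<Rightarrow> real"
  assumes "F differentiable (at x)"
  shows "(F has_derivative (\<lambda>h. grad F x \<bullet> h)) (at x)"
proof -
  obtain D where D: "(F has_derivative D) (at x)" using assms differentiable_def by blast
  then have lin: "linear D" using has_derivative_linear by blast
  have "\<And>h. D h = h \<bullet> adjoint D 1" using adjoint_works[OF lin, of _ 1] by simp
  then have "D = (\<lambda>h. adjoint D 1 \<bullet> h)" by (auto simp: inner_commute)
  with D have "(F has_derivative (\<lambda>h. adjoint D 1 \<bullet> h)) (at x)" by simp
  then show ?thesis using grad_unique by metis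
qed

lemma hess_works:
  fixes F :: "real^'n \<Rightarrow> real"
  assumes "grad F differentiable (at x)"
  shows "(grad F has_derivative (\<lambda>h. hess F x *v h)) (at x)"
proof -
  obtain D where D: "(grad F has_derivative D) (at x)" using assms differentiable_def by blast
  then have lin: "linear D" using has_derivative_linear by blast
  then have eq: "(\<lambda>h. matrix D *v h) = D" by simp
  have ex: "(grad F has_derivative (\<lambda>h. matrix D *v h)) (at x)" using D eq by simp
  have "hess F x = matrix D"
    unfolding hess_def
  proof (rule the_equality)
    show "(grad F has_derivative (\<lambda>h. matrix D *v h)) (at x)" by fact
    fix A assume "(grad F has_derivative (\<lambda>h. A *v h)) (at x)"
    then have "(\<lambda>h. A *v h) = (\<lambda>h. matrix D *v h)" using ex has_derivative_unique by blast
    then show "A = matrix D" by (metis matrix_eq)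
  qed
  then show ?thesis using ex by simp
qed

lemma hess_sym:
  fixes F :: "real^'n \<Rightarrow> real"
  assumes f2: "twice_differentiable F"
  shows "(hess F x *v u) \<bullet> v = (hess F x *v v) \<bullet> u"
proof -
  let ?A = "hess F x" and ?G = "grad F"
  have dF: "\<And>p. (F has_derivative (\<lambda>h. ?G p \<bullet> h)) (at p)"
    using f2 grad_works unfolding twice_differentiable_def by blast
  have dG: "(?G has_derivative (\<lambda>h. ?A *v h)) (at x)"
    using f2 hess_works unfolding twice_differentiable_def by blast
  define C where "C = norm u * (2 * norm u + norm v) + norm v * (2 * norm v + norm u)"
  have C0: "C \<ge> 0" unfolding C_def by simp
  define D where "D = (?A *v v) \<bullet> u - (?A *v u) \<bullet> v"
  have key: "\<bar>D\<bar> \<le> e * C" if e: "e > 0" for e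
  proof -
    obtain d where d: "d > 0"
      "\<And>y. norm (y - x) < d \<Longrightarrow> norm (?G y - ?G x - ?A *v (y - x)) \<le> e * norm (y - x)"
      using dG e unfolding has_derivative_at_alt by blast
    define t where "t = d / (2 * (norm u + norm v + 1))"
    have t0: "t > 0" unfolding t_def using d by (intro divide_pos_pos) (auto intro: add_pos_nonneg add_nonneg_pos)
    have td: "t * (norm u + norm v) < d"
    proof -
      have "t * (norm u + norm v) \<le> t * (norm u + norm v + 1)" using t0 by simp
      also have "\<dots> = d / 2"
      proof -
        have pos: "norm u + norm v + 1 > 0" by (smt (verit) norm_ge_zero)
        then show ?thesis unfolding t_def by (simp add: field_simps)
      qed
      finally show ?thesis using d by simp
    qed
    have td': "t * (norm v + norm u) < d" using td by (simp add: add.commute)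
    define \<Delta> where "\<Delta> = F (x + t *\<^sub>R u + t *\<^sub>R v) - F (x + t *\<^sub>R u) - F (x + t *\<^sub>R v) + F x"
    have b1: "\<bar>\<Delta> - t\<^sup>2 * ((?A *v v) \<bullet> u)\<bar> \<le> t\<^sup>2 * (e * (norm u * (2 * norm u + norm v)))"
      unfolding \<Delta>_def using delta_bound[OF dF d(2) less_imp_le[OF e] t0 td] e by simp
    have b2: "\<bar>\<Delta> - t\<^sup>2 * ((?A *v u) \<bullet> v)\<bar> \<le> t\<^sup>2 * (e * (norm v * (2 * norm v + norm u)))"
      using delta_bound[OF dF d(2) less_imp_le[OF e] t0 td'] e unfolding \<Delta>_def
      by (simp add: algebra_simps)
    have "t\<^sup>2 * \<bar>D\<bar> = \<bar>(\<Delta> - t\<^sup>2 * ((?A *v u) \<bullet> v)) - (\<Delta> - t\<^sup>2 * ((?A *v v) \<bullet> u))\<bar>"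
      unfolding D_def by (simp add: abs_mult right_diff_distrib[symmetric])
    also have "\<dots> \<le> t\<^sup>2 * (e * C)"
      using b1 b2 unfolding C_def by (simp add: algebra_simps)
    finally show ?thesis using t0 by simp
  qed
  have "D = 0"
  proof (rule ccontr)
    assume "D \<noteq> 0"
    then have "\<bar>D\<bar> > 0" by simp
    define e where "e = \<bar>D\<bar> / (2 * (C + 1))"
    have "e > 0" unfolding e_def using \<open>\<bar>D\<bar> > 0\<close> C0 by simp
    then have "\<bar>D\<bar> \<le> e * C" by (rule key)
    also have "\<dots> < \<bar>D\<bar>" unfolding e_def using \<open>\<bar>D\<bar> > 0\<close> C0
      by (simp add: field_simps add_nonneg_pos)
    finally show False by simp
  qed
  then show ?thesis unfolding D_def by simp
qed

lemma grad_qmodel: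
  fixes f :: "real^'n \<Rightarrow> real"
  assumes f2: "twice_differentiable f"
  shows "grad (qmodel f wt) wc = grad f wt + hess f wt *v (wc - wt)"
proof (rule grad_unique)
  let ?g = "grad f wt" and ?H = "hess f wt"
  have lin: "bounded_linear (\<lambda>x. ?H *v x)"
    by (simp add: matrix_vector_mul_linear linear_conv_bounded_linear)
  have d0: "((\<lambda>w. w - wt) has_derivative (\<lambda>h. h)) (at wc)"
    using has_derivative_diff[OF has_derivative_ident has_derivative_const[of wt]] by simp
  have dl: "((\<lambda>w. ?H *v (w - wt)) has_derivative (\<lambda>h. ?H *v h)) (at wc)"
    using bounded_linear.has_derivative[OF lin d0] .
  have d1: "((\<lambda>w. ?g \<bullet> (w - wt)) has_derivative (\<lambda>h. ?g \<bullet> h)) (at wc)"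
    using has_derivative_inner_right[OF d0] .
  have d2: "((\<lambda>w. (?H *v (w - wt)) \<bullet> (w - wt)) has_derivative
      (\<lambda>h. (?H *v (wc - wt)) \<bullet> h + (?H *v h) \<bullet> (wc - wt))) (at wc)"
    using has_derivative_inner[OF dl d0] .
  have d3: "((\<lambda>w. f wt + ?g \<bullet> (w - wt) + 1/2 * ((?H *v (w - wt)) \<bullet> (w - wt))) has_derivative
     (\<lambda>h. 0 + ?g \<bullet> h + 1/2 * ((?H *v (wc - wt)) \<bullet> h + (?H *v h) \<bullet> (wc - wt)))) (at wc)"
    by (intro has_derivative_add has_derivative_const d1 has_derivative_mult_right d2)
  moreover have "(\<lambda>h. 0 + ?g \<bullet> h + 1/2 * ((?H *v (wc - wt)) \<bullet> h + (?H *v h) \<bullet> (wc - wt)))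
     = (\<lambda>h. (?g + ?H *v (wc - wt)) \<bullet> h)"
    using hess_sym[OF f2, of wt] by (auto simp: fun_eq_iff inner_add_left)
  ultimately show "(qmodel f wt has_derivative (\<lambda>h. (?g + ?H *v (wc - wt)) \<bullet> h)) (at wc)"
    unfolding qmodel_def[abs_def] by simp
qed

lemma step_sol:
  fixes q :: "real^'n \<Rightarrow> real"
  assumes lam: "0 \<le> lam" "lam < 1" and sc: "sc \<ge> 0"
    and mn: "is_step_min lam q wc sc w s"
  shows "w = wc - (pos (q wc - (1 - lam) * sc) / (1 - lam + (norm (grad q wc))\<^sup>2)) *\<^sub>R grad q wc
       \<and> s = (1 - lam) * (sc + pos (q wc - (1 - lam) * sc) / (1 - lam + (norm (grad q wc))\<^sup>2))"
proof -
  define a where "a = q wc"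
  define v where "v = grad q wc"
  define V where "V = (norm v)\<^sup>2"
  define p where "p = pos (a - (1 - lam) * sc)"
  define \<Gamma> where "\<Gamma> = p / (1 - lam + V)"
  define ws where "ws = wc - \<Gamma> *\<^sub>R v"
  define ss where "ss = (1 - lam) * (sc + \<Gamma>)"
  have V0: "V \<ge> 0" unfolding V_def by simp
  have den: "1 - lam + V > 0" using lam V0 by simp
  have p0: "p \<ge> 0" and pa: "a - (1 - lam) * sc \<le> p" unfolding p_def pos_def by auto
  have \<Gamma>0: "\<Gamma> \<ge> 0" unfolding \<Gamma>_def using p0 den by simp
  have \<Gamma>p: "\<Gamma> * (1 - lam + V) = p" unfolding \<Gamma>_def using den by simp
  have vv: "v \<bullet> v = V" unfolding V_def by (simp add: power2_norm_eq_inner)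
  have feas: "s \<ge> 0" "a + v \<bullet> (w - wc) \<le> s"
    and opt: "\<And>w' s'. s' \<ge> 0 \<Longrightarrow> a + v \<bullet> (w' - wc) \<le> s' \<Longrightarrow> obj lam wc sc w s \<le> obj lam wc sc w' s'"
    using mn unfolding is_step_min_def Let_def a_def v_def by auto
  have ss0: "ss \<ge> 0" unfolding ss_def using lam sc \<Gamma>0 by simp
  have "a + v \<bullet> (ws - wc) = a - \<Gamma> * V" unfolding ws_def using vv by simp
  also have "\<dots> \<le> ss" unfolding ss_def using pa \<Gamma>p by (simp add: algebra_simps)
  finally have le: "obj lam wc sc w s \<le> obj lam wc sc ws ss" using opt ss0 by blast
  define d where "d = w - ws"
  define N where "N = (norm d)\<^sup>2"
  define P where "P = v \<bullet> d"
  have nw: "(norm (w - wc))\<^sup>2 = N - 2 * \<Gamma> * P + \<Gamma>\<^sup>2 * V"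
  proof -
    have "w - wc = d - \<Gamma> *\<^sub>R v" unfolding d_def ws_def by simp
    then have "(norm (w - wc))\<^sup>2 = (d - \<Gamma> *\<^sub>R v) \<bullet> (d - \<Gamma> *\<^sub>R v)" by (simp add: power2_norm_eq_inner)
    also have "\<dots> = d \<bullet> d - 2 * \<Gamma> * (v \<bullet> d) + \<Gamma>\<^sup>2 * (v \<bullet> v)"
      by (simp add: inner_diff_left inner_diff_right inner_commute power2_eq_square algebra_simps)
    finally show ?thesis unfolding N_def P_def using vv by (simp add: power2_norm_eq_inner)
  qed
  have nws: "(norm (ws - wc))\<^sup>2 = \<Gamma>\<^sup>2 * V"
    unfolding ws_def V_def by (simp add: power_mult_distrib)
  have fe: "a + P - \<Gamma> * V \<le> s"
  proof -
    have "v \<bullet> (w - wc) = P - \<Gamma> * V" unfolding P_def d_def ws_def using vv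
      by (simp add: inner_diff_right algebra_simps)
    then show ?thesis using feas by simp
  qed
  have cs: "\<Gamma> * (s - ss - P) \<ge> 0"
  proof (cases "\<Gamma> = 0")
    case True then show ?thesis by simp
  next
    case False
    then have "\<Gamma> > 0" using \<Gamma>0 by simp
    then have "p > 0" using \<Gamma>p den by (metis mult_pos_pos)
    then have "p = a - (1 - lam) * sc" unfolding p_def pos_def by (auto split: if_splits)
    then have "ss = a - \<Gamma> * V" unfolding ss_def using \<Gamma>p by (simp add: algebra_simps)
    then have "s - ss - P \<ge> 0" using fe by simp
    then show ?thesis using \<Gamma>0 by simp
  qed
  have ident: "obj lam wc sc w s - obj lam wc sc ws ss
      = (1 - lam) / 2 * N + 1/2 * (s - ss)\<^sup>2 + (1 - lam) * (\<Gamma> * (s - ss - P))"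
    unfolding obj_def nw nws ss_def by (simp add: power2_eq_square field_simps)
  have N0: "N \<ge> 0" unfolding N_def by simp
  have "(1 - lam) / 2 * N + 1/2 * (s - ss)\<^sup>2 + (1 - lam) * (\<Gamma> * (s - ss - P)) \<le> 0"
    using ident le by simp
  moreover have "(1 - lam) * (\<Gamma> * (s - ss - P)) \<ge> 0" using cs lam by simp
  moreover have "(1 - lam) / 2 * N \<ge> 0" using N0 lam by simp
  moreover have "1/2 * (s - ss)\<^sup>2 \<ge> 0" by simp
  ultimately have A: "(1 - lam) / 2 * N = 0" and B: "(s - ss)\<^sup>2 = 0" by linarith+
  from A lam have "N = 0" by simp
  then have "w = ws" unfolding N_def d_def by simp
  moreover from B have "s = ss" by simp
  ultimately show ?thesis unfolding ws_def ss_def \<Gamma>_def p_def V_def a_def v_def by simp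
qed

lemma pos_div: "D > 0 \<Longrightarrow> pos X / D = pos (X / D)"
  unfolding pos_def by (auto simp: divide_nonneg_pos) (metis divide_less_0_iff not_le)

theorem lemma7:
  fixes f :: "real^'n \<Rightarrow> real"
    and lam st sh s1 :: real
    and wt wh w1 :: "real^'n"
  assumes f2: "twice_differentiable f"
    and lam: "0 \<le> lam" "lam < 1"
    and st: "st \<ge> 0"
    and half: "is_step_min lam (qmodel f wt) wt st wh sh"
    and full: "is_step_min lam (qmodel f wt) wh sh w1 s1"
  shows "let g = grad f wt; H = hess f wt;
             G1 = pos (f wt - (1 - lam) * st) / (1 - lam + (norm g)\<^sup>2);
             G2 = pos ((f wt - G1 * (norm g)\<^sup>2 - (1 - lam)\<^sup>2 * (st + G1)
                        + 1/2 * G1\<^sup>2 * ((H *v g) \<bullet> g))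
                       / (1 - lam + (norm (g - G1 *\<^sub>R (H *v g)))\<^sup>2))
         in w1 = wt - (G1 + G2) *\<^sub>R g + (G2 * G1) *\<^sub>R (H *v g)
          \<and> s1 = (1 - lam) * ((1 - lam) * (st + G1) + G2)"
proof -
  define g where "g = grad f wt"
  define H where "H = hess f wt"
  define G1 where "G1 = pos (f wt - (1 - lam) * st) / (1 - lam + (norm g)\<^sup>2)"
  define X where "X = f wt - G1 * (norm g)\<^sup>2 - (1 - lam)\<^sup>2 * (st + G1) + 1/2 * G1\<^sup>2 * ((H *v g) \<bullet> g)"
  define v where "v = g - G1 *\<^sub>R (H *v g)"
  define D where "D = 1 - lam + (norm v)\<^sup>2"
  define G2 where "G2 = pos (X / D)"
  have D0: "D > 0" unfolding D_def using lam by (simp add: add_pos_nonneg)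
  have q0: "qmodel f wt wt = f wt" unfolding qmodel_def by simp
  have gq0: "grad (qmodel f wt) wt = g" using grad_qmodel[OF f2, of wt wt] unfolding g_def by simp
  from step_sol[OF lam st half] q0 gq0
  have wh: "wh = wt - G1 *\<^sub>R g" and sh: "sh = (1 - lam) * (st + G1)"
    unfolding G1_def by auto
  have sh0: "sh \<ge> 0" using half unfolding is_step_min_def Let_def by auto
  have Hm: "H *v (wh - wt) = (- G1) *\<^sub>R (H *v g)"
    unfolding wh by (metis add_diff_cancel_left' diff_conv_add_uminus matrix_vector_mult_scaleR scaleR_minus_left)
  have gg: "g \<bullet> g = (norm g)\<^sup>2" by (simp add: power2_norm_eq_inner)
  have q1: "qmodel f wt wh = f wt - G1 * (norm g)\<^sup>2 + 1/2 * G1\<^sup>2 * ((H *v g) \<bullet> g)"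
    unfolding qmodel_def g_def[symmetric] H_def[symmetric] Hm
    unfolding wh by (simp add: gg power2_eq_square algebra_simps)
  have gq1: "grad (qmodel f wt) wh = v"
    using grad_qmodel[OF f2, of wt wh] Hm unfolding v_def g_def H_def
    by simp
  have X1: "qmodel f wt wh - (1 - lam) * sh = X"
    unfolding q1 sh X_def by (simp add: power2_eq_square algebra_simps)
  have G2': "pos (qmodel f wt wh - (1 - lam) * sh) / (1 - lam + (norm (grad (qmodel f wt) wh))\<^sup>2) = G2"
    unfolding X1 gq1 G2_def D_def[symmetric] using pos_div[OF D0] by simp
  from step_sol[OF lam sh0 full] G2' gq1
  have w1: "w1 = wh - G2 *\<^sub>R v" and s1: "s1 = (1 - lam) * (sh + G2)" by auto
  have "w1 = wt - (G1 + G2) *\<^sub>R g + (G2 * G1) *\<^sub>R (H *v g)"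
    unfolding w1 wh v_def by (simp add: algebra_simps)
  moreover have "s1 = (1 - lam) * ((1 - lam) * (st + G1) + G2)"
    unfolding s1 sh by simp
  ultimately show ?thesis
    unfolding Let_def g_def[symmetric] H_def[symmetric] G1_def[symmetric] X_def[symmetric]
      v_def[symmetric] D_def[symmetric] G2_def[symmetric] by simp
qed
end
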